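(* Let $G$ be an undirected, weighted, connected graph on vertices $1,\dots,n$, and let $H$ be either its adjacency matrix or its Laplacian matrix. Write $H=Q^T\Lambda Q$ with $Q$ a real orthogonal matrix and $\Lambda=\mathrm{diag}(\lambda_1,\dots,\lambda_n)$, $\lambda_1\le\cdots\le\lambda_n$. For real $t$ let $p(t)=|\langle s|e^{itH}|r\rangle|^2$ be the fidelity of state transfer from a sender vertex $s$ to a receiver vertex $r$, and suppose there is perfect state transfer at time $t_0$, i.e. $p(t_0)=1$. For $j=1,\dots,n$ let $q_{j}$ denote the $(j,s)$ entry of $Q$ (the $s$-th entry of the $j$-th orthonormal eigenvector of $H$). Let $h\in\mathbb{R}$ satisfy $|h|<\frac{\pi}{\lambda_n-\lambda_1}$. Then for every $\sigma\in\mathbb{R}$, \[ p(t_0+h)\ \ge\ 1-h^2\sum_{j=1}^n q_{j}^2(\lambda_j-\sigma)^2 . \]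
   Context: For a weighted graph with edge weights $w(j,k)$, the adjacency matrix $A=[a_{jk}]$ has $a_{jk}=w(j,k)$ if $j,k$ are adjacent and $a_{jk}=0$ otherwise; the Laplacian is $L=R-A$ where $R$ is the diagonal matrix of row sums of $A$. $\{|1\rangle,\dots,|n\rangle\}$ is the standard basis of $\mathbb{C}^n$, so $\langle s|e^{itH}|r\rangle$ is the $(s,r)$ entry of $e^{itH}$. *)

theory Defs
  imports Complex_Main "Jordan_Normal_Form.Matrix"
begin

text \<open>Vertices 1..n of the paper are represented by 0..n-1.
  A weighted undirected graph: symmetric irreflexive adjacency relation on the
  vertex set with symmetric positive edge weights.\<close>

definition weighted_graph :: "nat \<Rightarrow> (nat \<Rightarrow> nat \<Rightarrow> bool) \<Rightarrow> (nat \<Rightarrow> nat \<Rightarrow> real) \<Rightarrow> bool" where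
  "weighted_graph n adj w \<longleftrightarrow>
     (\<forall>j k. adj j k \<longrightarrow> j < n \<and> k < n) \<and>
     (\<forall>j k. adj j k \<longrightarrow> adj k j) \<and>
     (\<forall>j. \<not> adj j j) \<and>
     (\<forall>j k. adj j k \<longrightarrow> w j k = w k j \<and> w j k > 0)"

definition connected_graph :: "nat \<Rightarrow> (nat \<Rightarrow> nat \<Rightarrow> bool) \<Rightarrow> bool" where
  "connected_graph n adj \<longleftrightarrow> n \<ge> 1 \<and> (\<forall>j k. j < n \<longrightarrow> k < n \<longrightarrow> adj\<^sup>*\<^sup>* j k)"

definition adjacency_matrix :: "nat \<Rightarrow> (nat \<Rightarrow> nat \<Rightarrow> bool) \<Rightarrow> (nat \<Rightarrow> nat \<Rightarrow> real) \<Rightarrow> real mat" where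
  "adjacency_matrix n adj w = mat n n (\<lambda>(j,k). if adj j k then w j k else 0)"

definition laplacian_matrix :: "nat \<Rightarrow> (nat \<Rightarrow> nat \<Rightarrow> bool) \<Rightarrow> (nat \<Rightarrow> nat \<Rightarrow> real) \<Rightarrow> real mat" where
  "laplacian_matrix n adj w =
     mat_diag n (\<lambda>j. \<Sum>k<n. adjacency_matrix n adj w $$ (j,k)) - adjacency_matrix n adj w"

definition mat_exp :: "complex mat \<Rightarrow> complex mat" where
  "mat_exp A = mat (dim_row A) (dim_col A) (\<lambda>(i,j). \<Sum>k. (A ^\<^sub>m k) $$ (i,j) / of_nat (fact k))"

definition fidelity :: "real mat \<Rightarrow> nat \<Rightarrow> nat \<Rightarrow> real \<Rightarrow> real" where
  "fidelity H s r t = (cmod (mat_exp ((\<i> * complex_of_real t) \<cdot>\<^sub>m map_mat complex_of_real H) $$ (s,r)))\<^sup>2"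

end

theory Submission
  imports Defs "Jordan_Normal_Form.Determinant"
begin

lemma pow_conj:
  fixes P :: "'a::comm_ring_1 mat"
  assumes P: "P \<in> carrier_mat n n" and PT: "P * transpose_mat P = 1\<^sub>m n"
    and TP: "transpose_mat P * P = 1\<^sub>m n"
  shows "(transpose_mat P * mat_diag n d * P) ^\<^sub>m k = transpose_mat P * mat_diag n (\<lambda>j. d j ^ k) * P"
proof (induction k)
  case 0
  have "transpose_mat P * mat_diag n (\<lambda>j. d j ^ 0) * P = transpose_mat P * P"
    using P by simp
  then show ?case using P TP by simp
next
  case (Suc k)
  have cancel: "P * (transpose_mat P * X) = X" if "X \<in> carrier_mat n m" for X m
  proof -
    have "P * (transpose_mat P * X) = (P * transpose_mat P) * X"
      using P that by (simp add: assoc_mult_mat[of P n n "transpose_mat P" n X m])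
    then show ?thesis using PT that by simp
  qed
  have "(transpose_mat P * mat_diag n d * P) ^\<^sub>m Suc k
     = transpose_mat P * mat_diag n (\<lambda>j. d j ^ k) * P * (transpose_mat P * mat_diag n d * P)"
    using Suc by simp
  also have "\<dots> = transpose_mat P * (mat_diag n (\<lambda>j. d j ^ k) * (P * (transpose_mat P * (mat_diag n d * P))))"
  proof -
    let ?T = "transpose_mat P" let ?X = "mat_diag n (\<lambda>j. d j ^ k)" let ?Y = "mat_diag n d"
    have c1: "?X * P \<in> carrier_mat n n" "?Y * P \<in> carrier_mat n n" using P by (auto intro!: mult_carrier_mat)
    have c2: "?T * (?Y * P) \<in> carrier_mat n n" using P c1 by (auto intro!: mult_carrier_mat)
    have 1: "?T * ?X * P = ?T * (?X * P)" by (rule assoc_mult_mat[of _ n n _ n _ n]) (use P in \<open>auto intro: mult_carrier_mat\<close>)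
    have 2: "?T * ?Y * P = ?T * (?Y * P)" by (rule assoc_mult_mat[of _ n n _ n _ n]) (use P in \<open>auto intro: mult_carrier_mat\<close>)
    have 3: "?T * (?X * P) * (?T * (?Y * P)) = ?T * ((?X * P) * (?T * (?Y * P)))"
      by (rule assoc_mult_mat[OF _ c1(1) c2]) (use P in auto)
    have 4: "(?X * P) * (?T * (?Y * P)) = ?X * (P * (?T * (?Y * P)))"
      by (rule assoc_mult_mat[OF mat_diag_dim P c2])
    show ?thesis unfolding 1 2 3 4 ..
  qed
  also have "\<dots> = transpose_mat P * (mat_diag n (\<lambda>j. d j ^ k) * (mat_diag n d * P))"
  proof -
    have "mat_diag n d * P \<in> carrier_mat n n" by (rule mult_carrier_mat[OF mat_diag_dim P])
    from cancel[OF this] show ?thesis by simp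
  qed
  also have "\<dots> = transpose_mat P * mat_diag n (\<lambda>j. d j ^ Suc k) * P"
  proof -
    let ?T = "transpose_mat P" let ?X = "mat_diag n (\<lambda>j. d j ^ k)" let ?Y = "mat_diag n d"
    have 4: "?X * (?Y * P) = (?X * ?Y) * P"
      by (rule assoc_mult_mat[symmetric, of _ n n _ n _ n]) (use P in \<open>auto intro: mult_carrier_mat\<close>)
    have 5: "?T * ((?X * ?Y) * P) = ?T * (?X * ?Y) * P"
      by (rule assoc_mult_mat[symmetric, of _ n n _ n _ n]) (use P in \<open>auto intro: mult_carrier_mat\<close>)
    show ?thesis unfolding 4 5 by (simp add: mult.commute)
  qed
  finally show ?case .
qed

lemma conj_entry:
  fixes P :: "'a::comm_ring_1 mat"
  assumes P: "P \<in> carrier_mat n n" and a: "a < n" and b: "b < n"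
  shows "(transpose_mat P * mat_diag n g * P) $$ (a,b) = (\<Sum>j<n. P $$ (j,a) * g j * P $$ (j,b))"
proof -
  have "transpose_mat P * mat_diag n g * P = transpose_mat P * (mat_diag n g * P)"
    using P by (simp add: assoc_mult_mat[of _ n n _ n _ n])
  also have "mat_diag n g * P = mat n n (\<lambda>(i,j). g i * P $$ (i,j))"
    using P by (rule mat_diag_mult_left)
  finally show ?thesis using P a b
    by (simp add: scalar_prod_def atLeast0LessThan mult.assoc)
qed

lemma exp_entry:
  fixes Q :: "real mat" and H :: "real mat"
  assumes Q: "Q \<in> carrier_mat n n" and TQ: "transpose_mat Q * Q = 1\<^sub>m n"
    and H: "H = transpose_mat Q * mat_diag n lam * Q" and a: "a < n" and b: "b < n"
  shows "mat_exp ((\<i> * complex_of_real t) \<cdot>\<^sub>m map_mat complex_of_real H) $$ (a,b)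
     = (\<Sum>j<n. complex_of_real (Q $$ (j,a) * Q $$ (j,b)) * exp (\<i> * complex_of_real (t * lam j)))"
proof -
  define P where "P = map_mat complex_of_real Q"
  define d where "d = (\<lambda>j. \<i> * complex_of_real (t * lam j))"
  have P: "P \<in> carrier_mat n n" using Q by (simp add: P_def)
  have QT: "Q * transpose_mat Q = 1\<^sub>m n"
    by (rule mat_mult_left_right_inverse[OF _ Q TQ]) (use Q in simp)
  have TP: "transpose_mat P * P = 1\<^sub>m n"
  proof -
    have "transpose_mat P * P = map_mat complex_of_real (transpose_mat Q * Q)"
      unfolding P_def using Q by (simp add: of_real_hom.mat_hom_mult[of _ n n _ n] map_mat_transpose)
    then show ?thesis using TQ by (simp add: of_real_hom.mat_hom_one)
  qed
  have PT: "P * transpose_mat P = 1\<^sub>m n"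
  proof -
    have "P * transpose_mat P = map_mat complex_of_real (Q * transpose_mat Q)"
      unfolding P_def using Q by (simp add: of_real_hom.mat_hom_mult[of _ n n _ n] map_mat_transpose)
    then show ?thesis using QT by (simp add: of_real_hom.mat_hom_one)
  qed
  have dg: "map_mat complex_of_real (mat_diag n lam) = mat_diag n (\<lambda>j. complex_of_real (lam j))"
    by (rule eq_matI) (auto simp: mat_diag_def)
  have sd: "c \<cdot>\<^sub>m mat_diag n f = mat_diag n (\<lambda>j. c * f j)" for c :: complex and f
    by (rule eq_matI) (auto simp: mat_diag_def)
  have hH: "map_mat complex_of_real H = transpose_mat P * mat_diag n (\<lambda>j. complex_of_real (lam j)) * P"
    unfolding H P_def using Q
    by (simp add: of_real_hom.mat_hom_mult[of _ n n _ n] map_mat_transpose dg)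
  have M: "(\<i> * complex_of_real t) \<cdot>\<^sub>m map_mat complex_of_real H = transpose_mat P * mat_diag n d * P"
  proof -
    let ?T = "transpose_mat P" let ?X = "mat_diag n (\<lambda>j. complex_of_real (lam j))"
    let ?c = "\<i> * complex_of_real t"
    have 1: "?c \<cdot>\<^sub>m (?T * ?X * P) = (?c \<cdot>\<^sub>m (?T * ?X)) * P"
      by (rule mult_smult_assoc_mat[symmetric, of _ n n _ n]) (use P in \<open>auto intro: mult_carrier_mat\<close>)
    have 2: "?c \<cdot>\<^sub>m (?T * ?X) = ?T * (?c \<cdot>\<^sub>m ?X)"
      by (rule mult_smult_distrib[symmetric, of _ n n _ n]) (use P in \<open>auto intro: mult_carrier_mat\<close>)
    show ?thesis unfolding hH 1 2 sd d_def by (simp add: mult.assoc)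
  qed
  have dim: "dim_row (transpose_mat P * mat_diag n d * P) = n" "dim_col (transpose_mat P * mat_diag n d * P) = n"
    using P by auto
  have "mat_exp ((\<i> * complex_of_real t) \<cdot>\<^sub>m map_mat complex_of_real H) $$ (a,b)
      = (\<Sum>k. (\<Sum>j<n. P $$ (j,a) * d j ^ k * P $$ (j,b)) / of_nat (fact k))"
    unfolding M mat_exp_def using a b dim
    by (simp add: pow_conj[OF P PT TP] conj_entry[OF P a b])
  also have "\<dots> = (\<Sum>k. \<Sum>j<n. (P $$ (j,a) * P $$ (j,b)) * (d j ^ k /\<^sub>R fact k))"
    by (simp add: sum_divide_distrib scaleR_conv_of_real divide_inverse mult_ac sum_distrib_left)
  also have "\<dots> = (\<Sum>j<n. \<Sum>k. (P $$ (j,a) * P $$ (j,b)) * (d j ^ k /\<^sub>R fact k))"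
    by (rule suminf_sum) (intro summable_mult summable_exp_generic)
  also have "\<dots> = (\<Sum>j<n. (P $$ (j,a) * P $$ (j,b)) * exp (d j))"
    by (intro sum.cong refl) (simp only: exp_def suminf_mult[OF summable_exp_generic])
  finally show ?thesis using a b Q by (simp add: P_def d_def)
qed
lemma cos_lb: "cos (x::real) \<ge> 1 - x^2 / 2"
proof -
  have "cos x = cos (2 * (x/2))" by simp
  also have "\<dots> = 1 - 2 * (sin (x/2))^2" by (rule cos_double_sin)
  finally have e: "cos x = 1 - 2 * (sin (x/2))^2" .
  have "\<bar>sin (x/2)\<bar> \<le> \<bar>x/2\<bar>" by (rule abs_sin_x_le_abs_x)
  then have "(sin (x/2))^2 \<le> (x/2)^2"
    by (metis abs_ge_zero power2_abs power_mono)
  then show ?thesis using e by (simp add: power2_eq_square)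
qed

lemma dbl:
  fixes a \<theta> :: "nat \<Rightarrow> real"
  assumes a: "\<And>j. a j \<ge> 0" and s: "(\<Sum>j<n. a j) = 1"
  shows "(cmod (\<Sum>j<n. complex_of_real (a j) * cis (\<theta> j)))^2 \<ge> 1 - (\<Sum>j<n. a j * (\<theta> j)^2)"
proof -
  let ?Y = "\<Sum>j<n. complex_of_real (a j) * cis (\<theta> j)"
  have "complex_of_real ((cmod ?Y)^2) = ?Y * cnj ?Y" by (rule complex_norm_square)
  also have "\<dots> = (\<Sum>j<n. \<Sum>k<n. complex_of_real (a j * a k) * cis (\<theta> j - \<theta> k))"
    by (simp add: cnj_sum sum_product cis_divide[symmetric] cis_cnj mult_ac divide_inverse)
  finally have "(cmod ?Y)^2 = Re (\<Sum>j<n. \<Sum>k<n. complex_of_real (a j * a k) * cis (\<theta> j - \<theta> k))"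
    by (metis Re_complex_of_real)
  also have "\<dots> = (\<Sum>j<n. \<Sum>k<n. a j * a k * cos (\<theta> j - \<theta> k))"
    by (simp add: Re_sum)
  also have "\<dots> \<ge> (\<Sum>j<n. \<Sum>k<n. a j * a k * (1 - (\<theta> j - \<theta> k)^2 / 2))"
    by (intro sum_mono mult_left_mono cos_lb) (simp add: a)
  finally have 1: "(cmod ?Y)^2 \<ge> (\<Sum>j<n. \<Sum>k<n. a j * a k * (1 - (\<theta> j - \<theta> k)^2 / 2))" .
  have "(\<Sum>j<n. \<Sum>k<n. a j * a k * (1 - (\<theta> j - \<theta> k)^2 / 2))
      = (\<Sum>j<n. \<Sum>k<n. a j * a k - (a j * (\<theta> j)^2) * a k / 2 - a j * (a k * (\<theta> k)^2) / 2 + (a j * \<theta> j) * (a k * \<theta> k))"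
    by (intro sum.cong refl) (simp add: power2_eq_square field_simps)
  also have "\<dots> = (\<Sum>j<n. a j) * (\<Sum>k<n. a k) - (\<Sum>j<n. a j * (\<theta> j)^2) * (\<Sum>k<n. a k) / 2
        - (\<Sum>j<n. a j) * (\<Sum>k<n. a k * (\<theta> k)^2) / 2 + (\<Sum>j<n. a j * \<theta> j) * (\<Sum>k<n. a k * \<theta> k)"
    by (simp add: sum.distrib sum_subtractf sum_product sum_divide_distrib)
  also have "\<dots> = 1 - (\<Sum>j<n. a j * (\<theta> j)^2) + (\<Sum>j<n. a j * \<theta> j)^2"
    using s by (simp add: power2_eq_square)
  finally show ?thesis using 1 by (smt (verit) zero_le_power2)
qed

lemma pst:
  fixes u v lam :: "nat \<Rightarrow> real"
  assumes su: "(\<Sum>j<n. (u j)^2) = 1" and sv: "(\<Sum>j<n. (v j)^2) = 1"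
    and p: "cmod (\<Sum>j<n. complex_of_real (u j * v j) * exp (\<i> * complex_of_real (t0 * lam j))) = 1"
  shows "(cmod (\<Sum>j<n. complex_of_real (u j * v j) * exp (\<i> * complex_of_real ((t0+h) * lam j))))^2
     \<ge> 1 - h^2 * (\<Sum>j<n. (u j)^2 * (lam j - \<sigma>)^2)"
proof -
  have ce: "exp (\<i> * complex_of_real x) = cis x" for x by (simp add: cis_conv_exp)
  define w where "w j = complex_of_real (v j) * cis (t0 * lam j)" for j
  define S where "S = (\<Sum>j<n. complex_of_real (u j) * w j)"
  have cS: "cmod S = 1" using p by (simp add: S_def w_def cis_conv_exp mult.assoc)
  define c where "c = cnj S"
  have SS: "S * cnj S = 1" using complex_norm_square[of S] cS by simp
  have cc: "c * cnj c = 1" "cnj c * c = 1" "c * S = 1" "cnj c * cnj S = 1"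
    using SS by (simp_all add: c_def mult.commute)
  have ww: "w j * cnj (w j) = complex_of_real ((v j)^2)" for j
  proof -
    have "cis (t0 * lam j) * cnj (cis (t0 * lam j)) = 1"
      using complex_norm_square[of "cis (t0 * lam j)"] by simp
    then show ?thesis by (simp add: w_def power2_eq_square mult_ac)
  qed
  have "complex_of_real (\<Sum>j<n. (cmod (c * w j - complex_of_real (u j)))^2)
      = (\<Sum>j<n. (c * w j - complex_of_real (u j)) * cnj (c * w j - complex_of_real (u j)))"
    by (simp only: of_real_sum complex_norm_square)
  also have "\<dots> = (\<Sum>j<n. (c * cnj c) * (w j * cnj (w j)) - c * (complex_of_real (u j) * w j)
        - cnj c * cnj (complex_of_real (u j) * w j) + complex_of_real ((u j)^2))"
    by (intro sum.cong refl) (simp add: algebra_simps power2_eq_square)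
  also have "\<dots> = (c * cnj c) * complex_of_real (\<Sum>j<n. (v j)^2) - c * S - cnj c * cnj S
        + complex_of_real (\<Sum>j<n. (u j)^2)"
    by (simp add: sum.distrib sum_subtractf sum_distrib_left S_def cnj_sum ww)
  also have "\<dots> = 0" using cc su sv by simp
  finally have "(\<Sum>j<n. (cmod (c * w j - complex_of_real (u j)))^2) = 0"
    by (simp only: of_real_eq_0_iff)
  then have "\<forall>j\<in>{..<n}. (cmod (c * w j - complex_of_real (u j)))^2 = 0"
    by (subst sum_nonneg_eq_0_iff[symmetric]) auto
  then have wu: "w j = cnj c * complex_of_real (u j)" if "j < n" for j
  proof -
    have "c * w j = complex_of_real (u j)" using that \<open>\<forall>j\<in>_. _\<close> by auto
    then have "cnj c * (c * w j) = cnj c * complex_of_real (u j)" by simp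
    then show ?thesis using cc by (simp add: mult.assoc[symmetric])
  qed
  let ?a = "\<lambda>j. (u j)^2" and ?\<theta> = "\<lambda>j. h * (lam j - \<sigma>)"
  have "(\<Sum>j<n. complex_of_real (u j * v j) * exp (\<i> * complex_of_real ((t0+h) * lam j)))
      = (\<Sum>j<n. complex_of_real (u j) * w j * cis (h * lam j))"
  proof (intro sum.cong refl)
    fix j
    have "exp (\<i> * complex_of_real ((t0+h) * lam j)) = cis ((t0+h) * lam j)" by (rule ce)
    also have "\<dots> = cis (t0 * lam j) * cis (h * lam j)" by (simp add: cis_mult distrib_right)
    finally show "complex_of_real (u j * v j) * exp (\<i> * complex_of_real ((t0+h) * lam j))
      = complex_of_real (u j) * w j * cis (h * lam j)" by (simp add: w_def mult_ac)
  qed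
  also have "\<dots> = (\<Sum>j<n. (cnj c * cis (h * \<sigma>)) * (complex_of_real (?a j) * cis (?\<theta> j)))"
    by (intro sum.cong refl) (simp add: wu cis_mult power2_eq_square right_diff_distrib mult_ac)
  also have "\<dots> = (cnj c * cis (h * \<sigma>)) * (\<Sum>j<n. complex_of_real (?a j) * cis (?\<theta> j))"
    by (simp add: sum_distrib_left)
  finally have Z: "cmod (\<Sum>j<n. complex_of_real (u j * v j) * exp (\<i> * complex_of_real ((t0+h) * lam j)))
      = cmod (\<Sum>j<n. complex_of_real (?a j) * cis (?\<theta> j))"
    using cS by (simp add: norm_mult c_def)
  have "(\<Sum>j<n. ?a j * (?\<theta> j)^2) = h^2 * (\<Sum>j<n. (u j)^2 * (lam j - \<sigma>)^2)"
    by (simp add: sum_distrib_left power_mult_distrib mult_ac)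
  then show ?thesis using dbl[of ?a n ?\<theta>] su Z by simp
qed

lemma col_norm:
  fixes Q :: "real mat"
  assumes Q: "Q \<in> carrier_mat n n" and TQ: "transpose_mat Q * Q = 1\<^sub>m n" and s: "s < n"
  shows "(\<Sum>j<n. (Q $$ (j,s))^2) = 1"
proof -
  have "(transpose_mat Q * Q) $$ (s,s) = 1" using TQ s by simp
  then show ?thesis using Q s by (simp add: scalar_prod_def atLeast0LessThan power2_eq_square)
qed

lemma sq1: "0 \<le> (x::real) \<Longrightarrow> x^2 = 1 \<Longrightarrow> x = 1"
  by (auto simp: power2_eq_1_iff)

theorem theorem2p2:
  fixes n :: nat and adj :: "nat \<Rightarrow> nat \<Rightarrow> bool" and w :: "nat \<Rightarrow> nat \<Rightarrow> real"
    and H Q :: "real mat" and lam :: "nat \<Rightarrow> real"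
    and s r :: nat and t0 h \<sigma> :: real
  assumes "weighted_graph n adj w" and "connected_graph n adj"
    and "H = adjacency_matrix n adj w \<or> H = laplacian_matrix n adj w"
    and "Q \<in> carrier_mat n n" and "transpose_mat Q * Q = 1\<^sub>m n"
    and "H = transpose_mat Q * mat_diag n lam * Q"
    and "\<forall>j k. j \<le> k \<longrightarrow> k < n \<longrightarrow> lam j \<le> lam k"
    and "s < n" and "r < n"
    and "fidelity H s r t0 = 1"
    and "\<bar>h\<bar> * (lam (n - 1) - lam 0) < pi"
  shows "fidelity H s r (t0 + h) \<ge> 1 - h\<^sup>2 * (\<Sum>j<n. (Q $$ (j,s))\<^sup>2 * (lam j - \<sigma>)\<^sup>2)"
proof -
  have F: "fidelity H s r t = (cmod (\<Sum>j<n. complex_of_real (Q $$ (j,s) * Q $$ (j,r)) * exp (\<i> * complex_of_real (t * lam j))))^2" for t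
    unfolding fidelity_def using exp_entry[OF assms(4,5,6,8,9)] by simp
  have "(cmod (\<Sum>j<n. complex_of_real (Q $$ (j,s) * Q $$ (j,r)) * exp (\<i> * complex_of_real (t0 * lam j))))^2 = 1"
    using assms(10) F by simp
  then have p: "cmod (\<Sum>j<n. complex_of_real (Q $$ (j,s) * Q $$ (j,r)) * exp (\<i> * complex_of_real (t0 * lam j))) = 1"
    by (rule sq1[OF norm_ge_zero])
  show ?thesis unfolding F
    by (rule pst[OF col_norm[OF assms(4,5,8)] col_norm[OF assms(4,5,9)] p])
qed

end
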